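(* Let $G\subset\mathrm{Diff}^1_+([0,1])$ be a group and let $\mathcal H=(h_n)_{n\in\mathbb N}$ be a sequence in $\mathrm{Diff}^1_+([0,1])$ such that $h_n g h_n^{-1}\to\mathrm{id}$ in the $C^1$-topology for every $g\in G$. Let $G_{\mathcal H}$ be the set of all $g\in\mathrm{Diff}^1_+([0,1])$ such that $h_n g h_n^{-1}\to\mathrm{id}$ in the $C^1$-topology. Then the completion $I^\infty(G)$ of $G$ is contained in $G_{\mathcal H}$; in particular $I^\infty(G)$ is a group of $C^1$-diffeomorphisms which is $C^1$-close to the identity.
   Context: (Such a $G$ is without linked fixed points.) A homeomorphism $h\in\mathrm{Homeo}_+([0,1])$ is induced by $g$ if $h(x)\in\{x,g(x)\}$ for every $x\in[0,1]$. For a group $G$, $I(G)$ is the group generated by all homeomorphisms induced by elements of $G$; $I^0(G)=G$, $I^{n+1}(G)=I(I^n(G))$, and the completion is $I^\infty(G)=\bigcup_n I^n(G)$. A group $G\subset \mathrm{Diff}^1_+([0,1])$ is $C^1$-close to the identity if there is a sequence $h_n\in \mathrm{Diff}^1_+([0,1])$ such that $h_n g h_n^{-1}\to \mathrm{id}$ in the $C^1$-topology for every $g\in G$. *)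

theory Defs
  imports "HOL-Analysis.Analysis"
begin

text \<open>Convention: maps of [0,1] are represented as functions real => real which
  are the identity outside [0,1]; this makes composition and inversion canonical.\<close>

definition Homeo_plus :: "(real \<Rightarrow> real) set" where
  "Homeo_plus = {f. continuous_on {0..1} f \<and> strict_mono_on {0..1} f
      \<and> f ` {0..1} = {0..1} \<and> (\<forall>x. x \<notin> {0..1} \<longrightarrow> f x = x)}"

definition D1 :: "(real \<Rightarrow> real) \<Rightarrow> real \<Rightarrow> real" where
  "D1 f x = (THE d. (f has_real_derivative d) (at x within {0..1}))"

text \<open>Orientation preserving C^1 diffeomorphisms of [0,1]: C^1 homeomorphisms
  with nowhere vanishing (hence positive) derivative, so that the inverse is C^1.\<close>
definition Diff1_plus :: "(real \<Rightarrow> real) set" where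
  "Diff1_plus = {f \<in> Homeo_plus.
      (\<forall>x\<in>{0..1}. (f has_real_derivative D1 f x) (at x within {0..1}) \<and> D1 f x \<noteq> 0)
      \<and> continuous_on {0..1} (D1 f)}"

definition C1_tendsto_id :: "(nat \<Rightarrow> real \<Rightarrow> real) \<Rightarrow> bool" where
  "C1_tendsto_id s \<longleftrightarrow> uniform_limit {0..1} s (\<lambda>x. x) sequentially
      \<and> uniform_limit {0..1} (\<lambda>n. D1 (s n)) (\<lambda>x. 1) sequentially"

definition is_group :: "(real \<Rightarrow> real) set \<Rightarrow> bool" where
  "is_group G \<longleftrightarrow> id \<in> G \<and> (\<forall>f\<in>G. \<forall>g\<in>G. f \<circ> g \<in> G) \<and> (\<forall>f\<in>G. inv f \<in> G)"

inductive_set gen_group :: "(real \<Rightarrow> real) set \<Rightarrow> (real \<Rightarrow> real) set" for S where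
  gen_id: "id \<in> gen_group S"
| gen_base: "s \<in> S \<Longrightarrow> s \<in> gen_group S"
| gen_comp: "a \<in> gen_group S \<Longrightarrow> b \<in> gen_group S \<Longrightarrow> a \<circ> b \<in> gen_group S"
| gen_inv: "a \<in> gen_group S \<Longrightarrow> inv a \<in> gen_group S"

definition induced_by :: "(real \<Rightarrow> real) \<Rightarrow> (real \<Rightarrow> real) \<Rightarrow> bool" where
  "induced_by h g \<longleftrightarrow> h \<in> Homeo_plus \<and> (\<forall>x\<in>{0..1}. h x = x \<or> h x = g x)"

definition I_op :: "(real \<Rightarrow> real) set \<Rightarrow> (real \<Rightarrow> real) set" where
  "I_op G = gen_group {h. \<exists>g\<in>G. induced_by h g}"

definition I_inf :: "(real \<Rightarrow> real) set \<Rightarrow> (real \<Rightarrow> real) set" where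
  "I_inf G = (\<Union>n. (I_op ^^ n) G)"

definition G_H :: "(nat \<Rightarrow> real \<Rightarrow> real) \<Rightarrow> (real \<Rightarrow> real) set" where
  "G_H h = {g \<in> Diff1_plus. C1_tendsto_id (\<lambda>n. h n \<circ> g \<circ> inv (h n))}"

definition C1_close_to_id :: "(real \<Rightarrow> real) set \<Rightarrow> bool" where
  "C1_close_to_id G \<longleftrightarrow> (\<exists>h. (\<forall>n. h n \<in> Diff1_plus) \<and>
      (\<forall>g\<in>G. C1_tendsto_id (\<lambda>n. h n \<circ> g \<circ> inv (h n))))"

end

theory Submission imports Defs begin

lemma homeo_in: "f \<in> Homeo_plus \<Longrightarrow> x \<in> {0..1} \<Longrightarrow> f x \<in> {0..1}"
  unfolding Homeo_plus_def by blast

lemma homeo_out: "f \<in> Homeo_plus \<Longrightarrow> x \<notin> {0..1} \<Longrightarrow> f x = x"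
  unfolding Homeo_plus_def by blast

lemma homeo_cont: "f \<in> Homeo_plus \<Longrightarrow> continuous_on {0..1} f"
  unfolding Homeo_plus_def by blast

lemma homeo_mono: "f \<in> Homeo_plus \<Longrightarrow> strict_mono_on {0..1} f"
  unfolding Homeo_plus_def by blast

lemma homeo_img: "f \<in> Homeo_plus \<Longrightarrow> f ` {0..1} = {0..1}"
  unfolding Homeo_plus_def by blast

lemma homeo_in_iff: "f \<in> Homeo_plus \<Longrightarrow> f x \<in> {0..1} \<longleftrightarrow> x \<in> {0..1}"
  by (cases "x \<in> {0..1}") (use homeo_in[of f x] homeo_out[of f x] in auto)

lemma homeo_inj: assumes "f \<in> Homeo_plus" shows "inj f"
proof (rule injI)
  fix x y assume e: "f x = f y"
  show "x = y"
  proof (cases "x \<in> {0..1} \<and> y \<in> {0..1}")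
    case True
    have m: "strict_mono_on {0..1} f" using homeo_mono[OF assms] .
    show ?thesis
    proof (rule ccontr)
      assume "x \<noteq> y"
      then have "x < y \<or> y < x" by auto
      then show False
      proof
        assume "x < y" then have "f x < f y" using True m by (simp add: strict_mono_onD)
        then show False using e by simp
      next
        assume "y < x" then have "f y < f x" using True m by (simp add: strict_mono_onD)
        then show False using e by simp
      qed
    qed
  next
    case False
    then have "x \<notin> {0..1} \<or> y \<notin> {0..1}" by blast
    then show ?thesis
    proof
      assume x: "x \<notin> {0..1}"
      then have "f x = x" using homeo_out[OF assms] by blast
      then have "y \<notin> {0..1}" using x e homeo_in[OF assms, of y] by auto
      then show ?thesis using \<open>f x = x\<close> e homeo_out[OF assms, of y] by simp
    next
      assume y: "y \<notin> {0..1}"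
      then have "f y = y" using homeo_out[OF assms] by blast
      then have "x \<notin> {0..1}" using y e homeo_in[OF assms, of x] by auto
      then show ?thesis using \<open>f y = y\<close> e homeo_out[OF assms, of x] by simp
    qed
  qed
qed

lemma homeo_surj: assumes "f \<in> Homeo_plus" shows "surj f"
proof -
  have "y \<in> range f" for y
  proof (cases "y \<in> {0..1}")
    case True then show ?thesis using homeo_img[OF assms] by blast
  next
    case False then show ?thesis using homeo_out[OF assms, of y] by (metis rangeI)
  qed
  then show ?thesis by blast
qed

lemma homeo_bij: "f \<in> Homeo_plus \<Longrightarrow> bij f"
  unfolding bij_def using homeo_inj homeo_surj by simp

lemma homeo_inv_f: "f \<in> Homeo_plus \<Longrightarrow> inv f (f x) = x"
  by (rule inv_f_f[OF homeo_inj])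

lemma homeo_f_inv: "f \<in> Homeo_plus \<Longrightarrow> f (inv f x) = x"
  by (rule surj_f_inv_f[OF homeo_surj])

lemma homeo_inv_in: "f \<in> Homeo_plus \<Longrightarrow> x \<in> {0..1} \<Longrightarrow> inv f x \<in> {0..1}"
  using homeo_in_iff[of f "inv f x"] homeo_f_inv[of f x] by simp

lemma homeo_inv: assumes f: "f \<in> Homeo_plus" shows "inv f \<in> Homeo_plus"
proof -
  have c: "continuous_on {0..1} (inv f)"
  proof -
    have "continuous_on (f ` {0..1}) (inv f)"
      by (rule continuous_on_inv[OF homeo_cont[OF f]]) (auto simp: homeo_inv_f[OF f])
    then show ?thesis by (simp add: homeo_img[OF f])
  qed
  have m: "strict_mono_on {0..1} (inv f)"
  proof (rule strict_mono_onI)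
    fix r s :: real assume rs: "r \<in> {0..1}" "s \<in> {0..1}" "r < s"
    show "inv f r < inv f s"
    proof (rule ccontr)
      assume "\<not> inv f r < inv f s"
      then have "inv f s \<le> inv f r" by simp
      moreover have "inv f s \<noteq> inv f r" using rs homeo_f_inv[OF f, of r] homeo_f_inv[OF f, of s] by auto
      ultimately have "inv f s < inv f r" by simp
      then have "f (inv f s) < f (inv f r)"
        using homeo_mono[OF f] homeo_inv_in[OF f] rs by (simp add: strict_mono_onD)
      then show False using rs homeo_f_inv[OF f, of r] homeo_f_inv[OF f, of s] by simp
    qed
  qed
  have i: "inv f ` {0..1} = {0..1}"
  proof
    show "inv f ` {0..1} \<subseteq> {0..1}" using homeo_inv_in[OF f] by blast
    show "{0..1} \<subseteq> inv f ` {0..1}"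
    proof
      fix x :: real assume "x \<in> {0..1}"
      then have "f x \<in> {0..1}" "inv f (f x) = x" using homeo_in[OF f] homeo_inv_f[OF f] by auto
      then show "x \<in> inv f ` {0..1}" by (metis image_eqI)
    qed
  qed
  have o: "\<forall>x. x \<notin> {0..1} \<longrightarrow> inv f x = x"
    using homeo_out[OF f] homeo_inv_f[OF f] by metis
  show ?thesis unfolding Homeo_plus_def using c m i o by blast
qed

lemma homeo_comp: assumes f: "f \<in> Homeo_plus" and g: "g \<in> Homeo_plus" shows "f \<circ> g \<in> Homeo_plus"
proof -
  have c: "continuous_on {0..1} (f \<circ> g)"
    unfolding o_def by (rule continuous_on_compose2[OF homeo_cont[OF f] homeo_cont[OF g]]) (use homeo_img[OF g] in simp)
  have m: "strict_mono_on {0..1} (f \<circ> g)"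
  proof (rule strict_mono_onI)
    fix r s :: real assume rs: "r \<in> {0..1}" "s \<in> {0..1}" "r < s"
    then have "g r < g s" using homeo_mono[OF g] by (simp add: strict_mono_onD)
    moreover have "g r \<in> {0..1}" "g s \<in> {0..1}" using rs homeo_in[OF g] by auto
    ultimately show "(f \<circ> g) r < (f \<circ> g) s" using homeo_mono[OF f] by (simp add: strict_mono_onD)
  qed
  have i: "(f \<circ> g) ` {0..1} = {0..1}" using homeo_img[OF f] homeo_img[OF g] by (metis image_comp)
  have o: "\<forall>x. x \<notin> {0..1} \<longrightarrow> (f \<circ> g) x = x" using homeo_out[OF f] homeo_out[OF g] by simp
  show ?thesis unfolding Homeo_plus_def using c m i o by blast
qed

lemma homeo_id: "id \<in> Homeo_plus"
  unfolding Homeo_plus_def by (auto simp: strict_mono_on_def continuous_on_id)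


section \<open>Derivatives\<close>

lemma D1_eq:
  assumes x: "x \<in> {0..1}" and d: "(f has_real_derivative d) (at x within {0..1})"
  shows "D1 f x = d"
proof -
  have u: "d' = d" if "(f has_real_derivative d') (at x within {0..1})" for d'
  proof -
    have "(f has_vector_derivative d') (at x within cbox 0 1)"
      "(f has_vector_derivative d) (at x within cbox 0 1)"
      using that d by (simp_all add: has_real_derivative_iff_has_vector_derivative cbox_interval)
    then show ?thesis
      using vector_derivative_unique_within_closed_interval[of 0 1 x f d' d] x by (simp add: cbox_interval)
  qed
  show ?thesis unfolding D1_def using d u by (rule the_equality)
qed

lemma diff1_homeo: "f \<in> Diff1_plus \<Longrightarrow> f \<in> Homeo_plus"
  unfolding Diff1_plus_def by blast

lemma diff1_deriv: "f \<in> Diff1_plus \<Longrightarrow> x \<in> {0..1} \<Longrightarrow> (f has_real_derivative D1 f x) (at x within {0..1})"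
  unfolding Diff1_plus_def by blast

lemma diff1_nz: "f \<in> Diff1_plus \<Longrightarrow> x \<in> {0..1} \<Longrightarrow> D1 f x \<noteq> 0"
  unfolding Diff1_plus_def by blast

lemma diff1_cont: "f \<in> Diff1_plus \<Longrightarrow> continuous_on {0..1} (D1 f)"
  unfolding Diff1_plus_def by blast

lemma diff1I:
  assumes f: "f \<in> Homeo_plus"
    and der: "\<And>x. x \<in> {0..1} \<Longrightarrow> (f has_real_derivative d x) (at x within {0..1})"
    and nz: "\<And>x. x \<in> {0..1} \<Longrightarrow> d x \<noteq> 0"
    and c: "continuous_on {0..1} d"
  shows "f \<in> Diff1_plus \<and> (\<forall>x\<in>{0..1}. D1 f x = d x)"
proof -
  have e: "\<forall>x\<in>{0..1}. D1 f x = d x" using D1_eq der by blast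
  have "continuous_on {0..1} (D1 f)" using continuous_on_cong[of "{0..1}" "{0..1}" "D1 f" d] e c by simp
  then show ?thesis unfolding Diff1_plus_def using f der nz e by auto
qed

lemma diff1_comp:
  assumes f: "f \<in> Diff1_plus" and g: "g \<in> Diff1_plus"
  shows "f \<circ> g \<in> Diff1_plus \<and> (\<forall>x\<in>{0..1}. D1 (f \<circ> g) x = D1 f (g x) * D1 g x)"
proof (rule diff1I)
  show "f \<circ> g \<in> Homeo_plus" using homeo_comp diff1_homeo f g by blast
  have gh: "g \<in> Homeo_plus" using g diff1_homeo by blast
  show "((f \<circ> g) has_real_derivative D1 f (g x) * D1 g x) (at x within {0..1})" if x: "x \<in> {0..1}" for x
  proof (rule DERIV_image_chain)
    show "(f has_real_derivative D1 f (g x)) (at (g x) within g ` {0..1})"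
      using diff1_deriv[OF f homeo_in[OF gh x]] homeo_img[OF gh] by simp
    show "(g has_real_derivative D1 g x) (at x within {0..1})" using diff1_deriv[OF g x] .
  qed
  show "D1 f (g x) * D1 g x \<noteq> 0" if x: "x \<in> {0..1}" for x
    using diff1_nz[OF f homeo_in[OF gh x]] diff1_nz[OF g x] by simp
  show "continuous_on {0..1} (\<lambda>x. D1 f (g x) * D1 g x)"
  proof (rule continuous_on_mult)
    show "continuous_on {0..1} (\<lambda>x. D1 f (g x))"
      by (rule continuous_on_compose2[OF diff1_cont[OF f] homeo_cont[OF gh]]) (use homeo_img[OF gh] in simp)
    show "continuous_on {0..1} (D1 g)" by (rule diff1_cont[OF g])
  qed
qed

lemma diff1_inv:
  assumes f: "f \<in> Diff1_plus"
  shows "inv f \<in> Diff1_plus \<and> (\<forall>y\<in>{0..1}. D1 (inv f) y = 1 / D1 f (inv f y))"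
proof (rule diff1I)
  have fh: "f \<in> Homeo_plus" using f diff1_homeo by blast
  show "inv f \<in> Homeo_plus" using homeo_inv fh by blast
  show "(inv f has_real_derivative 1 / D1 f (inv f y)) (at y within {0..1})" if y: "y \<in> {0..1}" for y
  proof -
    define a where "a = inv f y"
    have a: "a \<in> {0..1}" "f a = y" unfolding a_def using homeo_inv_in[OF fh y] homeo_f_inv[OF fh] by auto
    have nz: "D1 f a \<noteq> 0" using diff1_nz[OF f a(1)] .
    have d: "(f has_derivative (*) (D1 f a)) (at a within {0..1})"
      using diff1_deriv[OF f a(1)] by (simp add: has_field_derivative_def)
    have ci: "continuous (at (f a) within f ` {0..1}) (inv f)"
    proof -
      have "continuous_on {0..1} (inv f)" using homeo_cont[OF homeo_inv[OF fh]] .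
      then show ?thesis using a y homeo_img[OF fh] by (simp add: continuous_on_eq_continuous_within)
    qed
    have lin: "linear ((*) (1 / D1 f a))" by (simp add: linear_scale_left)
    have idd: "(*) (1 / D1 f a) \<circ> (*) (D1 f a) = id" using nz by (auto simp: fun_eq_iff)
    have "(inv f has_derivative (*) (1 / D1 f a)) (at (f a) within f ` {0..1})"
      by (rule has_derivative_inverse_within[OF d ci a(1) lin idd]) (simp add: homeo_inv_f[OF fh])
    then show ?thesis using a homeo_img[OF fh] by (simp add: has_field_derivative_def a_def)
  qed
  show "1 / D1 f (inv f y) \<noteq> 0" if y: "y \<in> {0..1}" for y
    using diff1_nz[OF f homeo_inv_in[OF fh y]] by simp
  show "continuous_on {0..1} (\<lambda>y. 1 / D1 f (inv f y))"
  proof (rule continuous_on_divide)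
    show "continuous_on {0..1} (\<lambda>y. D1 f (inv f y))"
      by (rule continuous_on_compose2[OF diff1_cont[OF f] homeo_cont[OF homeo_inv[OF fh]]]) (use homeo_inv_in[OF fh] in auto)
  qed (use diff1_nz[OF f homeo_inv_in[OF fh]] in auto)
qed

lemma diff1_id: "id \<in> Diff1_plus \<and> (\<forall>x\<in>{0..1}. D1 id x = 1)"
  by (rule diff1I[OF homeo_id]) (auto simp: id_def intro!: derivative_eq_intros)


section \<open>Uniform convergence\<close>

lemma C1_iff: "C1_tendsto_id s \<longleftrightarrow>
   (\<forall>e>0. \<exists>N. \<forall>n\<ge>N. \<forall>x\<in>{0..1}. \<bar>s n x - x\<bar> < e) \<and>
   (\<forall>e>0. \<exists>N. \<forall>n\<ge>N. \<forall>x\<in>{0..1}. \<bar>D1 (s n) x - 1\<bar> < e)"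
  by (simp add: C1_tendsto_id_def uniform_limit_sequentially_iff dist_real_def)

lemma C1_dom:
  assumes le: "\<And>n x. x \<in> {0..1} \<Longrightarrow> \<bar>k n x - x\<bar> \<le> \<bar>a n x - x\<bar> \<and> \<bar>D1 (k n) x - 1\<bar> \<le> \<bar>D1 (a n) x - 1\<bar>"
    and a: "C1_tendsto_id a"
  shows "C1_tendsto_id k"
  unfolding C1_iff
proof (intro conjI allI impI)
  fix e :: real assume e: "e > 0"
  obtain N where N: "\<forall>n\<ge>N. \<forall>x\<in>{0..1}. \<bar>a n x - x\<bar> < e" using a e unfolding C1_iff by blast
  show "\<exists>N. \<forall>n\<ge>N. \<forall>x\<in>{0..1}. \<bar>k n x - x\<bar> < e"
  proof (intro exI allI impI ballI)
    fix n :: nat and x :: real assume "N \<le> n" "x \<in> {0..1}"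
    then show "\<bar>k n x - x\<bar> < e" using N le[of x n] by fastforce
  qed
next
  fix e :: real assume e: "e > 0"
  obtain N where N: "\<forall>n\<ge>N. \<forall>x\<in>{0..1}. \<bar>D1 (a n) x - 1\<bar> < e" using a e unfolding C1_iff by blast
  show "\<exists>N. \<forall>n\<ge>N. \<forall>x\<in>{0..1}. \<bar>D1 (k n) x - 1\<bar> < e"
  proof (intro exI allI impI ballI)
    fix n :: nat and x :: real assume "N \<le> n" "x \<in> {0..1}"
    then show "\<bar>D1 (k n) x - 1\<bar> < e" using N le[of x n] by fastforce
  qed
qed

lemma arith1:
  fixes u v d e :: real
  assumes "\<bar>u - 1\<bar> < d" "\<bar>v - 1\<bar> < d" "d \<le> 1" "3 * d \<le> e"
  shows "\<bar>u * v - 1\<bar> < e"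
proof -
  have v: "\<bar>v\<bar> \<le> 2" using assms by linarith
  have "\<bar>(u - 1) * v\<bar> \<le> d * 2"
    unfolding abs_mult by (rule mult_mono) (use assms v in auto)
  moreover have "u * v - 1 = (u - 1) * v + (v - 1)" by algebra
  ultimately show ?thesis using assms by (smt (verit))
qed

lemma arith2:
  fixes u d e :: real
  assumes "\<bar>u - 1\<bar> < d" "d \<le> 1/2" "2 * d \<le> e"
  shows "\<bar>1 / u - 1\<bar> < e"
proof -
  have u: "u > 1/2" using assms by linarith
  have "1 / u - 1 = (1 - u) / u" using u by (simp add: field_simps)
  then have "\<bar>1 / u - 1\<bar> = \<bar>1 - u\<bar> / u" using u by simp
  also have "\<dots> \<le> \<bar>1 - u\<bar> / (1/2)" by (rule divide_left_mono) (use u in auto)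
  also have "\<dots> < d / (1/2)" using assms by (simp add: abs_minus_commute)
  finally show ?thesis using assms by simp
qed

lemma C1_comp:
  assumes D: "\<And>n. a n \<in> Diff1_plus" "\<And>n. b n \<in> Diff1_plus"
    and a: "C1_tendsto_id a" and b: "C1_tendsto_id b"
  shows "C1_tendsto_id (\<lambda>n. a n \<circ> b n)"
  unfolding C1_iff
proof (intro conjI allI impI)
  fix e :: real assume e: "e > 0"
  obtain N1 where N1: "\<forall>n\<ge>N1. \<forall>x\<in>{0..1}. \<bar>a n x - x\<bar> < e/2" using a e unfolding C1_iff by (meson half_gt_zero)
  obtain N2 where N2: "\<forall>n\<ge>N2. \<forall>x\<in>{0..1}. \<bar>b n x - x\<bar> < e/2" using b e unfolding C1_iff by (meson half_gt_zero)
  show "\<exists>N. \<forall>n\<ge>N. \<forall>x\<in>{0..1}. \<bar>(a n \<circ> b n) x - x\<bar> < e"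
  proof (intro exI allI impI ballI)
    fix n :: nat and x :: real assume n: "max N1 N2 \<le> n" and x: "x \<in> {0..1}"
    have bx: "b n x \<in> {0..1}" using homeo_in[OF diff1_homeo[OF D(2)] x] .
    have "\<bar>a n (b n x) - b n x\<bar> < e/2" using N1 n bx by auto
    moreover have "\<bar>b n x - x\<bar> < e/2" using N2 n x by auto
    ultimately show "\<bar>(a n \<circ> b n) x - x\<bar> < e" unfolding o_def by linarith
  qed
next
  fix e :: real assume e: "e > 0"
  define d where "d = min (e/3) 1"
  have d: "d > 0" "d \<le> 1" "3 * d \<le> e" unfolding d_def using e by auto
  obtain N1 where N1: "\<forall>n\<ge>N1. \<forall>x\<in>{0..1}. \<bar>D1 (a n) x - 1\<bar> < d" using a d unfolding C1_iff by blast
  obtain N2 where N2: "\<forall>n\<ge>N2. \<forall>x\<in>{0..1}. \<bar>D1 (b n) x - 1\<bar> < d" using b d unfolding C1_iff by blast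
  show "\<exists>N. \<forall>n\<ge>N. \<forall>x\<in>{0..1}. \<bar>D1 (a n \<circ> b n) x - 1\<bar> < e"
  proof (intro exI allI impI ballI)
    fix n :: nat and x :: real assume n: "max N1 N2 \<le> n" and x: "x \<in> {0..1}"
    have bx: "b n x \<in> {0..1}" using homeo_in[OF diff1_homeo[OF D(2)] x] .
    have eq: "D1 (a n \<circ> b n) x = D1 (a n) (b n x) * D1 (b n) x" using diff1_comp[OF D(1) D(2)] x by blast
    have "\<bar>D1 (a n) (b n x) - 1\<bar> < d" using N1 n bx by auto
    moreover have "\<bar>D1 (b n) x - 1\<bar> < d" using N2 n x by auto
    ultimately show "\<bar>D1 (a n \<circ> b n) x - 1\<bar> < e" unfolding eq using arith1 d by blast
  qed
qed

lemma C1_inv: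
  assumes D: "\<And>n. a n \<in> Diff1_plus" and a: "C1_tendsto_id a"
  shows "C1_tendsto_id (\<lambda>n. inv (a n))"
  unfolding C1_iff
proof (intro conjI allI impI)
  fix e :: real assume e: "e > 0"
  obtain N where N: "\<forall>n\<ge>N. \<forall>x\<in>{0..1}. \<bar>a n x - x\<bar> < e" using a e unfolding C1_iff by blast
  show "\<exists>N. \<forall>n\<ge>N. \<forall>x\<in>{0..1}. \<bar>inv (a n) x - x\<bar> < e"
  proof (intro exI allI impI ballI)
    fix n :: nat and x :: real assume n: "N \<le> n" and x: "x \<in> {0..1}"
    have ah: "a n \<in> Homeo_plus" using diff1_homeo[OF D] .
    have y: "inv (a n) x \<in> {0..1}" "a n (inv (a n) x) = x" using homeo_inv_in[OF ah x] homeo_f_inv[OF ah] by auto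
    have "\<bar>a n (inv (a n) x) - inv (a n) x\<bar> < e" using N n y(1) by auto
    then show "\<bar>inv (a n) x - x\<bar> < e" using y(2) by simp
  qed
next
  fix e :: real assume e: "e > 0"
  define d where "d = min (e/2) (1/2)"
  have d: "d > 0" "d \<le> 1/2" "2 * d \<le> e" unfolding d_def using e by auto
  obtain N where N: "\<forall>n\<ge>N. \<forall>x\<in>{0..1}. \<bar>D1 (a n) x - 1\<bar> < d" using a d unfolding C1_iff by blast
  show "\<exists>N. \<forall>n\<ge>N. \<forall>x\<in>{0..1}. \<bar>D1 (inv (a n)) x - 1\<bar> < e"
  proof (intro exI allI impI ballI)
    fix n :: nat and x :: real assume n: "N \<le> n" and x: "x \<in> {0..1}"
    have ah: "a n \<in> Homeo_plus" using diff1_homeo[OF D] .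
    have y: "inv (a n) x \<in> {0..1}" using homeo_inv_in[OF ah x] .
    have eq: "D1 (inv (a n)) x = 1 / D1 (a n) (inv (a n) x)" using diff1_inv[OF D] x by blast
    have "\<bar>D1 (a n) (inv (a n) x) - 1\<bar> < d" using N n y by auto
    then show "\<bar>D1 (inv (a n)) x - 1\<bar> < e" unfolding eq using arith2 d by blast
  qed
qed

section \<open>Conjugation\<close>

lemma conj_id: "h \<in> Homeo_plus \<Longrightarrow> h \<circ> id \<circ> inv h = id"
  by (simp add: fun_eq_iff homeo_f_inv)

lemma conj_comp: "h \<in> Homeo_plus \<Longrightarrow> h \<circ> (a \<circ> b) \<circ> inv h = (h \<circ> a \<circ> inv h) \<circ> (h \<circ> b \<circ> inv h)"
  by (simp add: fun_eq_iff homeo_inv_f)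

lemma conj_inv:
  assumes h: "h \<in> Homeo_plus" and a: "a \<in> Homeo_plus"
  shows "h \<circ> inv a \<circ> inv h = inv (h \<circ> a \<circ> inv h)"
proof -
  have "inv (h \<circ> a \<circ> inv h) = h \<circ> inv a \<circ> inv h"
    by (rule inv_unique_comp) (simp_all add: fun_eq_iff homeo_inv_f[OF h] homeo_f_inv[OF h] homeo_inv_f[OF a] homeo_f_inv[OF a])
  then show ?thesis by simp
qed

lemma conj_diff1: "h \<in> Diff1_plus \<Longrightarrow> g \<in> Diff1_plus \<Longrightarrow> h \<circ> g \<circ> inv h \<in> Diff1_plus"
  using diff1_comp diff1_inv by blast

lemma C1_const_id: "C1_tendsto_id (\<lambda>n. id)"
  unfolding C1_iff using diff1_id by auto


section \<open>Induced homeomorphisms\<close>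

lemma induced_nbhd1:
  assumes k: "induced_by k g" and x: "x \<in> {0..1}" and kx: "k x \<noteq> x"
  shows "\<exists>d>0. \<forall>y\<in>{0..1}. dist y x < d \<longrightarrow> k y = g y"
proof -
  have kh: "k \<in> Homeo_plus" and kk: "\<forall>y\<in>{0..1}. k y = y \<or> k y = g y" using k unfolding induced_by_def by auto
  have c: "continuous_on {0..1} (\<lambda>y. k y - y)" by (intro continuous_intros homeo_cont[OF kh])
  have e: "\<bar>k x - x\<bar> > 0" using kx by simp
  obtain d where d: "d > 0" "\<forall>y\<in>{0..1}. dist y x < d \<longrightarrow> dist (k y - y) (k x - x) < \<bar>k x - x\<bar>"
    using c x e unfolding continuous_on_iff by blast
  show ?thesis
  proof (intro exI conjI ballI impI)
    fix y :: real assume y: "y \<in> {0..1}" "dist y x < d"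
    then have "dist (k y - y) (k x - x) < \<bar>k x - x\<bar>" using d by blast
    then have "k y \<noteq> y" by (auto simp: dist_real_def)
    then show "k y = g y" using kk y by blast
  qed (rule d(1))
qed

lemma induced_nbhd2:
  assumes k: "induced_by k g" and g: "g \<in> Homeo_plus" and x: "x \<in> {0..1}" and kx: "k x = x" and gx: "g x \<noteq> x"
  shows "\<exists>d>0. \<forall>y\<in>{0..1}. dist y x < d \<longrightarrow> k y = y"
proof -
  have kh: "k \<in> Homeo_plus" and kk: "\<forall>y\<in>{0..1}. k y = y \<or> k y = g y" using k unfolding induced_by_def by auto
  have c1: "continuous_on {0..1} (\<lambda>y. k y - y)" by (intro continuous_intros homeo_cont[OF kh])
  have c2: "continuous_on {0..1} (\<lambda>y. g y - y)" by (intro continuous_intros homeo_cont[OF g])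
  define e where "e = \<bar>g x - x\<bar> / 2"
  have e: "e > 0" using gx unfolding e_def by simp
  obtain d1 where d1: "d1 > 0" "\<forall>y\<in>{0..1}. dist y x < d1 \<longrightarrow> dist (k y - y) (k x - x) < e"
    using c1 x e unfolding continuous_on_iff by blast
  obtain d2 where d2: "d2 > 0" "\<forall>y\<in>{0..1}. dist y x < d2 \<longrightarrow> dist (g y - y) (g x - x) < e"
    using c2 x e unfolding continuous_on_iff by blast
  show ?thesis
  proof (intro exI conjI ballI impI)
    fix y :: real assume y: "y \<in> {0..1}" "dist y x < min d1 d2"
    then have "dist (k y - y) (k x - x) < e" "dist (g y - y) (g x - x) < e" using d1 d2 by auto
    then have a1: "\<bar>k y - y\<bar> < e" "\<bar>g y - y - (g x - x)\<bar> < e" using kx unfolding dist_real_def by auto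
    have "k y \<noteq> g y"
    proof
      assume "k y = g y"
      have "\<bar>g x - x\<bar> \<le> \<bar>g y - y\<bar> + \<bar>g y - y - (g x - x)\<bar>"
        using abs_triangle_ineq4[of "g y - y" "g y - y - (g x - x)"] by simp
      moreover have "\<bar>g y - y\<bar> < e" using a1(1) \<open>k y = g y\<close> by simp
      moreover have "\<And>a b c::real. a \<le> b + c \<Longrightarrow> b < a/2 \<Longrightarrow> c < a/2 \<Longrightarrow> False" by linarith
      ultimately show False using a1(2) unfolding e_def by blast
    qed
    then show "k y = y" using kk y by blast
  qed (use d1 d2 in simp)
qed

lemma induced_diff1:
  assumes g: "g \<in> Diff1_plus" and fx: "\<forall>p\<in>{0..1}. g p = p \<longrightarrow> D1 g p = 1"
    and k: "induced_by k g"
  shows "k \<in> Diff1_plus \<and> (\<forall>x\<in>{0..1}. D1 k x = (if k x = x then 1 else D1 g x))"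
proof (rule diff1I)
  have kh: "k \<in> Homeo_plus" and kk: "\<forall>y\<in>{0..1}. k y = y \<or> k y = g y" using k unfolding induced_by_def by auto
  have gh: "g \<in> Homeo_plus" using diff1_homeo[OF g] .
  show "k \<in> Homeo_plus" by (rule kh)
  define dd where "dd = (\<lambda>x. if k x = x then 1 else D1 g x)"
  have ddg: "dd y = D1 g y" if "y \<in> {0..1}" "k y = g y" for y
    using that fx unfolding dd_def by auto
  show "(k has_real_derivative (if k x = x then 1 else D1 g x)) (at x within {0..1})" if x: "x \<in> {0..1}" for x
  proof (cases "k x = x")
    case False
    obtain d where d: "d > 0" "\<forall>y\<in>{0..1}. dist y x < d \<longrightarrow> k y = g y" using induced_nbhd1[OF k x False] by blast
    have "(g has_derivative (*) (D1 g x)) (at x within {0..1})" using diff1_deriv[OF g x] by (simp add: has_field_derivative_def)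
    then have "(k has_derivative (*) (D1 g x)) (at x within {0..1})"
      by (rule has_derivative_transform_within[OF _ d(1) x]) (use d in auto)
    then show ?thesis using False by (simp add: has_field_derivative_def)
  next
    case True
    show ?thesis
    proof (cases "g x = x")
      case False
      obtain d where d: "d > 0" "\<forall>y\<in>{0..1}. dist y x < d \<longrightarrow> k y = y" using induced_nbhd2[OF k gh x True False] by blast
      have "((\<lambda>y. y) has_derivative (*) 1) (at x within {0..1})" using DERIV_ident by (simp add: has_field_derivative_def)
      then have "(k has_derivative (*) 1) (at x within {0..1})"
        by (rule has_derivative_transform_within[OF _ d(1) x]) (use d in auto)
      then show ?thesis using True by (simp add: has_field_derivative_def)
    next
      case gfix: True
      have g1: "D1 g x = 1" using fx x gfix by blast
      have gl: "((\<lambda>y. (g y - g x) / (y - x)) \<longlongrightarrow> 1) (at x within {0..1})"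
        using diff1_deriv[OF g x] g1 by (simp add: has_field_derivative_iff)
      have "((\<lambda>y. (k y - k x) / (y - x)) \<longlongrightarrow> 1) (at x within {0..1})"
        unfolding tendsto_iff
      proof (intro allI impI)
        fix e :: real assume e: "e > 0"
        have "eventually (\<lambda>y. dist ((g y - g x) / (y - x)) 1 < e) (at x within {0..1})"
          using gl e unfolding tendsto_iff by blast
        then obtain d where d: "d > 0" "\<forall>y\<in>{0..1}. y \<noteq> x \<and> dist y x < d \<longrightarrow> dist ((g y - g x) / (y - x)) 1 < e"
          unfolding eventually_at by blast
        show "eventually (\<lambda>y. dist ((k y - k x) / (y - x)) 1 < e) (at x within {0..1})"
          unfolding eventually_at
        proof (intro exI conjI ballI impI)
          fix y :: real assume y: "y \<in> {0..1}" "y \<noteq> x \<and> dist y x < d"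
          show "dist ((k y - k x) / (y - x)) 1 < e"
          proof (cases "k y = y")
            case True then show ?thesis using y e \<open>k x = x\<close> by simp
          next
            case False then have "k y = g y" using kk y by blast
            then show ?thesis using d y \<open>k x = x\<close> gfix by auto
          qed
        qed (rule d(1))
      qed
      then show ?thesis using True by (simp add: has_field_derivative_iff)
    qed
  qed
  show "(if k x = x then 1 else D1 g x) \<noteq> 0" if x: "x \<in> {0..1}" for x
    using diff1_nz[OF g x] by simp
  have "continuous (at x within {0..1}) dd" if x: "x \<in> {0..1}" for x
  proof -
    have cg: "continuous (at x within {0..1}) (D1 g)"
      using diff1_cont[OF g] x by (simp add: continuous_on_eq_continuous_within)
    show ?thesis
    proof (cases "k x = x")
      case False
      obtain d where d: "d > 0" "\<forall>y\<in>{0..1}. dist y x < d \<longrightarrow> k y = g y" using induced_nbhd1[OF k x False] by blast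
      show ?thesis by (rule continuous_transform_within[OF cg d(1) x]) (use d ddg in auto)
    next
      case True
      show ?thesis
      proof (cases "g x = x")
        case False
        obtain d where d: "d > 0" "\<forall>y\<in>{0..1}. dist y x < d \<longrightarrow> k y = y" using induced_nbhd2[OF k gh x True False] by blast
        have "continuous (at x within {0..1}) (\<lambda>y. 1::real)" by simp
        then show ?thesis by (rule continuous_transform_within[OF _ d(1) x]) (use d in \<open>auto simp: dd_def\<close>)
      next
        case gfix: True
        have g1: "D1 g x = 1" using fx x gfix by blast
        show ?thesis unfolding continuous_within_eps_delta
        proof (intro allI impI)
          fix e :: real assume e: "e > 0"
          obtain d where d: "d > 0" "\<forall>y\<in>{0..1}. dist y x < d \<longrightarrow> dist (D1 g y) (D1 g x) < e"
            using cg e unfolding continuous_within_eps_delta by blast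
          show "\<exists>d>0. \<forall>y\<in>{0..1}. dist y x < d \<longrightarrow> dist (dd y) (dd x) < e"
          proof (intro exI conjI ballI impI)
            fix y :: real assume y: "y \<in> {0..1}" "dist y x < d"
            have "dd x = 1" using True unfolding dd_def by simp
            moreover have "dd y = 1 \<or> dd y = D1 g y" unfolding dd_def by simp
            ultimately show "dist (dd y) (dd x) < e" using d y e g1 by auto
          qed (rule d(1))
        qed
      qed
    qed
  qed
  then show "continuous_on {0..1} (\<lambda>x. if k x = x then 1 else D1 g x)"
    unfolding dd_def[symmetric] by (simp add: continuous_on_eq_continuous_within)
qed


section \<open>The group G_H\<close>

lemma conj_D1:
  assumes h: "h \<in> Diff1_plus" and g: "g \<in> Diff1_plus" and y: "y \<in> {0..1}"
  shows "D1 (h \<circ> g \<circ> inv h) y = D1 h (g (inv h y)) * D1 g (inv h y) * (1 / D1 h (inv h y))"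
proof -
  have hh: "h \<in> Homeo_plus" using diff1_homeo[OF h] .
  have z: "inv h y \<in> {0..1}" using homeo_inv_in[OF hh y] .
  have hg: "h \<circ> g \<in> Diff1_plus" using diff1_comp[OF h g] by blast
  have hi: "inv h \<in> Diff1_plus" using diff1_inv[OF h] by blast
  have "D1 ((h \<circ> g) \<circ> inv h) y = D1 (h \<circ> g) (inv h y) * D1 (inv h) y"
    using diff1_comp[OF hg hi] y by blast
  also have "D1 (h \<circ> g) (inv h y) = D1 h (g (inv h y)) * D1 g (inv h y)"
    using diff1_comp[OF h g] z by simp
  also have "D1 (inv h) y = 1 / D1 h (inv h y)" using diff1_inv[OF h] y by blast
  finally show ?thesis .
qed

lemma conj_D1_fix:
  assumes h: "h \<in> Diff1_plus" and g: "g \<in> Diff1_plus" and p: "p \<in> {0..1}" and gp: "g p = p"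
  shows "D1 (h \<circ> g \<circ> inv h) (h p) = D1 g p"
proof -
  have hh: "h \<in> Homeo_plus" using diff1_homeo[OF h] .
  have "D1 (h \<circ> g \<circ> inv h) (h p) = D1 h p * D1 g p * (1 / D1 h p)"
    using conj_D1[OF h g homeo_in[OF hh p]] homeo_inv_f[OF hh] gp by simp
  then show ?thesis using diff1_nz[OF h p] by simp
qed

lemma GH_fix:
  assumes H: "\<And>n. h n \<in> Diff1_plus" and g: "g \<in> G_H h" and p: "p \<in> {0..1}" and gp: "g p = p"
  shows "D1 g p = 1"
proof (rule ccontr)
  assume ne: "D1 g p \<noteq> 1"
  have gd: "g \<in> Diff1_plus" and c: "C1_tendsto_id (\<lambda>n. h n \<circ> g \<circ> inv (h n))" using g unfolding G_H_def by auto
  obtain N where N: "\<forall>n\<ge>N. \<forall>x\<in>{0..1}. \<bar>D1 (h n \<circ> g \<circ> inv (h n)) x - 1\<bar> < \<bar>D1 g p - 1\<bar>"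
    using c ne unfolding C1_iff by (meson zero_less_abs_iff right_minus_eq)
  have "h N p \<in> {0..1}" using homeo_in[OF diff1_homeo[OF H] p] .
  then have "\<bar>D1 (h N \<circ> g \<circ> inv (h N)) (h N p) - 1\<bar> < \<bar>D1 g p - 1\<bar>" using N by blast
  then show False using conj_D1_fix[OF H gd p gp] by simp
qed

lemma conj_fix:
  assumes H: "\<And>n. h n \<in> Diff1_plus" and g: "g \<in> G_H h"
  shows "\<forall>q\<in>{0..1}. (h n \<circ> g \<circ> inv (h n)) q = q \<longrightarrow> D1 (h n \<circ> g \<circ> inv (h n)) q = 1"
proof (intro ballI impI)
  fix q :: real assume q: "q \<in> {0..1}" and cq: "(h n \<circ> g \<circ> inv (h n)) q = q"
  have hh: "h n \<in> Homeo_plus" using diff1_homeo[OF H] .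
  have gd: "g \<in> Diff1_plus" using g unfolding G_H_def by auto
  define p where "p = inv (h n) q"
  have p: "p \<in> {0..1}" "h n p = q" unfolding p_def using homeo_inv_in[OF hh q] homeo_f_inv[OF hh] by auto
  have "h n (g p) = h n p" using cq p unfolding p_def by simp
  then have gp: "g p = p" using homeo_inj[OF hh] by (simp add: inj_eq)
  have "D1 (h n \<circ> g \<circ> inv (h n)) (h n p) = D1 g p" using conj_D1_fix[OF H gd p(1) gp] .
  then show "D1 (h n \<circ> g \<circ> inv (h n)) q = 1" using GH_fix[OF H g p(1) gp] p(2) by simp
qed

lemma GH_induced:
  assumes H: "\<And>n. h n \<in> Diff1_plus" and g: "g \<in> G_H h" and k: "induced_by k g"
  shows "k \<in> G_H h"
proof -
  have gd: "g \<in> Diff1_plus" and c: "C1_tendsto_id (\<lambda>n. h n \<circ> g \<circ> inv (h n))" using g unfolding G_H_def by auto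
  have kd: "k \<in> Diff1_plus" using induced_diff1[OF gd _ k] GH_fix[OF H g] by blast
  have kh: "k \<in> Homeo_plus" and kk: "\<forall>y\<in>{0..1}. k y = y \<or> k y = g y" using k unfolding induced_by_def by auto
  have "C1_tendsto_id (\<lambda>n. h n \<circ> k \<circ> inv (h n))"
  proof (rule C1_dom[OF _ c])
    fix n :: nat and y :: real assume y: "y \<in> {0..1}"
    have hh: "h n \<in> Homeo_plus" using diff1_homeo[OF H] .
    have cd: "h n \<circ> g \<circ> inv (h n) \<in> Diff1_plus" using conj_diff1[OF H gd] .
    have ind: "induced_by (h n \<circ> k \<circ> inv (h n)) (h n \<circ> g \<circ> inv (h n))"
      unfolding induced_by_def
    proof (intro conjI ballI)
      show "h n \<circ> k \<circ> inv (h n) \<in> Homeo_plus" using homeo_comp[OF homeo_comp[OF hh kh] homeo_inv[OF hh]] .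
      fix x :: real assume x: "x \<in> {0..1}"
      have z: "inv (h n) x \<in> {0..1}" using homeo_inv_in[OF hh x] .
      show "(h n \<circ> k \<circ> inv (h n)) x = x \<or> (h n \<circ> k \<circ> inv (h n)) x = (h n \<circ> g \<circ> inv (h n)) x"
        using kk[rule_format, OF z] homeo_f_inv[OF hh, of x] by auto
    qed
    have dd: "D1 (h n \<circ> k \<circ> inv (h n)) y = (if (h n \<circ> k \<circ> inv (h n)) y = y then 1 else D1 (h n \<circ> g \<circ> inv (h n)) y)"
      using induced_diff1[OF cd conj_fix[OF H g] ind] y by blast
    have vv: "(h n \<circ> k \<circ> inv (h n)) y = y \<or> (h n \<circ> k \<circ> inv (h n)) y = (h n \<circ> g \<circ> inv (h n)) y"
      using ind y unfolding induced_by_def by blast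
    show "\<bar>(h n \<circ> k \<circ> inv (h n)) y - y\<bar> \<le> \<bar>(h n \<circ> g \<circ> inv (h n)) y - y\<bar> \<and>
          \<bar>D1 (h n \<circ> k \<circ> inv (h n)) y - 1\<bar> \<le> \<bar>D1 (h n \<circ> g \<circ> inv (h n)) y - 1\<bar>"
      using vv dd by auto
  qed
  then show ?thesis unfolding G_H_def using kd by blast
qed

lemma GH_id: assumes H: "\<And>n. h n \<in> Diff1_plus" shows "id \<in> G_H h"
proof -
  have "(\<lambda>n. h n \<circ> id \<circ> inv (h n)) = (\<lambda>n. id)" using conj_id diff1_homeo[OF H] by auto
  then show ?thesis unfolding G_H_def using diff1_id C1_const_id by simp
qed

lemma GH_comp: assumes H: "\<And>n. h n \<in> Diff1_plus" and a: "a \<in> G_H h" and b: "b \<in> G_H h"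
  shows "a \<circ> b \<in> G_H h"
proof -
  have ad: "a \<in> Diff1_plus" and ca: "C1_tendsto_id (\<lambda>n. h n \<circ> a \<circ> inv (h n))" using a unfolding G_H_def by auto
  have bd: "b \<in> Diff1_plus" and cb: "C1_tendsto_id (\<lambda>n. h n \<circ> b \<circ> inv (h n))" using b unfolding G_H_def by auto
  have e: "(\<lambda>n. h n \<circ> (a \<circ> b) \<circ> inv (h n)) = (\<lambda>n. (h n \<circ> a \<circ> inv (h n)) \<circ> (h n \<circ> b \<circ> inv (h n)))"
    using conj_comp diff1_homeo[OF H] by blast
  have "C1_tendsto_id (\<lambda>n. (h n \<circ> a \<circ> inv (h n)) \<circ> (h n \<circ> b \<circ> inv (h n)))"
    by (rule C1_comp[OF conj_diff1[OF H ad] conj_diff1[OF H bd] ca cb])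
  then show ?thesis unfolding G_H_def using e diff1_comp[OF ad bd] by simp
qed

lemma GH_inv: assumes H: "\<And>n. h n \<in> Diff1_plus" and a: "a \<in> G_H h"
  shows "inv a \<in> G_H h"
proof -
  have ad: "a \<in> Diff1_plus" and ca: "C1_tendsto_id (\<lambda>n. h n \<circ> a \<circ> inv (h n))" using a unfolding G_H_def by auto
  have e: "(\<lambda>n. h n \<circ> inv a \<circ> inv (h n)) = (\<lambda>n. inv (h n \<circ> a \<circ> inv (h n)))"
    using conj_inv diff1_homeo[OF H] diff1_homeo[OF ad] by blast
  have "C1_tendsto_id (\<lambda>n. inv (h n \<circ> a \<circ> inv (h n)))"
    by (rule C1_inv[OF conj_diff1[OF H ad] ca])
  then show ?thesis unfolding G_H_def using e diff1_inv[OF ad] by simp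
qed

lemma gen_group_sub:
  assumes H: "\<And>n. h n \<in> Diff1_plus" and S: "S \<subseteq> G_H h"
  shows "gen_group S \<subseteq> G_H h"
proof
  fix x assume "x \<in> gen_group S"
  then show "x \<in> G_H h"
  proof (induction rule: gen_group.induct)
    case gen_id then show ?case using GH_id[of h, OF H] by blast
  next
    case (gen_base s) then show ?case using S by blast
  next
    case (gen_comp a b) then show ?case using GH_comp[of h, OF H] by blast
  next
    case (gen_inv a) then show ?case using GH_inv[of h, OF H] by blast
  qed
qed

lemma Iop_sub:
  assumes H: "\<And>n. h n \<in> Diff1_plus" and S: "S \<subseteq> G_H h"
  shows "I_op S \<subseteq> G_H h"
  unfolding I_op_def
proof (rule gen_group_sub[OF H])
  show "{k. \<exists>g\<in>S. induced_by k g} \<subseteq> G_H h"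
  proof
    fix k assume "k \<in> {k. \<exists>g\<in>S. induced_by k g}"
    then obtain g where g: "g \<in> S" "induced_by k g" by blast
    show "k \<in> G_H h" using GH_induced[of h g k, OF H] g S by blast
  qed
qed

lemma Ipow_sub:
  assumes H: "\<And>n. h n \<in> Diff1_plus" and S: "G \<subseteq> G_H h"
  shows "(I_op ^^ n) G \<subseteq> G_H h"
  by (induction n) (use S Iop_sub[OF H] in auto)

lemma Iop_incr: assumes "S \<subseteq> Homeo_plus" shows "S \<subseteq> I_op S"
proof
  fix s assume s: "s \<in> S"
  then have "induced_by s s" using assms unfolding induced_by_def by blast
  then show "s \<in> I_op S" unfolding I_op_def using s by (blast intro: gen_group.gen_base)
qed

theorem corollaryc:
  fixes G :: "(real \<Rightarrow> real) set" and h :: "nat \<Rightarrow> real \<Rightarrow> real"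
  assumes "is_group G" and "G \<subseteq> Diff1_plus"
    and "\<forall>n. h n \<in> Diff1_plus"
    and "\<forall>g\<in>G. C1_tendsto_id (\<lambda>n. h n \<circ> g \<circ> inv (h n))"
  shows "I_inf G \<subseteq> G_H h \<and> I_inf G \<subseteq> Diff1_plus \<and> is_group (I_inf G)
         \<and> C1_close_to_id (I_inf G)"
proof -
  have H: "\<And>n. h n \<in> Diff1_plus" using assms(3) by blast
  have GG: "G \<subseteq> G_H h" using assms(2,4) unfolding G_H_def by blast
  have sub: "\<And>n. (I_op ^^ n) G \<subseteq> G_H h" using Ipow_sub[OF H GG] .
  have GHD: "G_H h \<subseteq> Diff1_plus" unfolding G_H_def by blast
  have A: "I_inf G \<subseteq> G_H h" unfolding I_inf_def using sub by blast
  have B: "I_inf G \<subseteq> Diff1_plus" using A GHD by blast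
  have chain: "(I_op ^^ n) G \<subseteq> (I_op ^^ Suc n) G" for n
  proof -
    have "(I_op ^^ n) G \<subseteq> Homeo_plus" using sub[of n] GHD diff1_homeo by blast
    then show ?thesis using Iop_incr by simp
  qed
  have mono: "m \<le> n \<Longrightarrow> (I_op ^^ m) G \<subseteq> (I_op ^^ n) G" for m n
    using lift_Suc_mono_le[of "\<lambda>n. (I_op ^^ n) G", OF chain] by blast
  have Sg: "(I_op ^^ Suc n) G = gen_group {k. \<exists>g\<in>(I_op ^^ n) G. induced_by k g}" for n
    by (simp add: I_op_def)
  have C: "is_group (I_inf G)"
    unfolding is_group_def
  proof (intro conjI ballI)
    have "id \<in> (I_op ^^ 0) G" using assms(1) unfolding is_group_def by simp
    then show "id \<in> I_inf G" unfolding I_inf_def by blast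
  next
    fix f g assume f: "f \<in> I_inf G" and g: "g \<in> I_inf G"
    obtain m where m: "f \<in> (I_op ^^ m) G" using f unfolding I_inf_def by blast
    obtain n where n: "g \<in> (I_op ^^ n) G" using g unfolding I_inf_def by blast
    have "(I_op ^^ m) G \<subseteq> (I_op ^^ Suc (max m n)) G" by (rule mono) simp
    moreover have "(I_op ^^ n) G \<subseteq> (I_op ^^ Suc (max m n)) G" by (rule mono) simp
    ultimately have "f \<in> (I_op ^^ Suc (max m n)) G" "g \<in> (I_op ^^ Suc (max m n)) G"
      using m n by blast+
    then have "f \<circ> g \<in> (I_op ^^ Suc (max m n)) G" unfolding Sg by (rule gen_group.gen_comp)
    then show "f \<circ> g \<in> I_inf G" unfolding I_inf_def by blast
  next
    fix f assume f: "f \<in> I_inf G"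
    obtain m where m: "f \<in> (I_op ^^ m) G" using f unfolding I_inf_def by blast
    have "(I_op ^^ m) G \<subseteq> (I_op ^^ Suc m) G" by (rule mono) simp
    then have "f \<in> (I_op ^^ Suc m) G" using m by blast
    then have "inv f \<in> (I_op ^^ Suc m) G" unfolding Sg by (rule gen_group.gen_inv)
    then show "inv f \<in> I_inf G" unfolding I_inf_def by blast
  qed
  have D: "C1_close_to_id (I_inf G)"
    unfolding C1_close_to_id_def using H A unfolding G_H_def by blast
  show ?thesis using A B C D by blast
qed

end
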